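(* Let $\hat a,\hat b,\hat c,\hat d\in\hat{\mathbb Q}$ and suppose there exists $\hat q\in\hat{\mathbb U}$ such that $\hat a\hat q=\hat q\hat b$ and $\hat c\hat q=\hat q\hat d$. Suppose $\hat a=\hat x^*\hat\lambda\hat x$ and $\hat b=\hat y^*\hat\lambda\hat y$, where $\hat x,\hat y\in\hat{\mathbb U}$, $\hat\lambda\in\mathbb{DC}$ and the standard part of $\hat\lambda$ is not a real number. Write $\hat x\hat c\hat x^*=c_1+c_2 j+(c_3+c_4 j)\varepsilon$ and $\hat y\hat d\hat y^*=d_1+d_2 j+(d_3+d_4 j)\varepsilon$ with $c_t,d_t\in\mathbb C$. If $c_2\neq0$, then there are exactly two unit dual quaternions $\hat q$ satisfying both equations, they differ only by sign, and they are $$\hat q=\pm\,\hat x^*\Big(\overline{\sqrt{\tfrac{d_2}{c_2}}}+\frac{\overline{c_2d_4}-\overline{d_2c_4}}{2\,\overline{c_2}^{\,2}}\,\overline{\sqrt{\tfrac{c_2}{d_2}}}\,\varepsilon\Big)\hat y.$$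
   Context: $\mathbb{Q}$ denotes the real quaternions with units $i,j,k$; complex numbers are identified with quaternions $a+bi$, so every quaternion is uniquely $z_1+z_2 j$ with $z_1,z_2\in\mathbb C$. $\varepsilon$ satisfies $\varepsilon\ne0$, $\varepsilon^2=0$ and commutes with quaternions. $\hat{\mathbb Q}$ is the set of dual quaternions $\tilde p_{st}+\tilde p_{\mathcal I}\varepsilon$ ($\tilde p_{st}$ the standard part), with conjugate $\hat p^*=\tilde p_{st}^*+\tilde p_{\mathcal I}^*\varepsilon$. $\mathbb{DC}$ is the set of dual complex numbers $a+b\varepsilon$, $a,b\in\mathbb C$. $\hat{\mathbb U}$ is the set of unit dual quaternions, i.e. $\hat p$ with $|\hat p|=1$, where $|\hat p|=|\tilde p_{st}|+\frac{\mathrm{sc}(\tilde p_{st}^*\tilde p_{\mathcal I})}{|\tilde p_{st}|}\varepsilon$ for $\tilde p_{st}\ne0$, $\mathrm{sc}(\tilde p)=\frac12(\tilde p+\tilde p^* )$; equivalently $\hat p^*\hat p=\hat p\hat p^*=1$. In the formula, $\sqrt{d_2/c_2}$ is a complex square root and $\sqrt{c_2/d_2}$ denotes its reciprocal; bars denote complex conjugation. *)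

theory Defs
  imports Complex_Main
begin

datatype quat = Quat (q_re: real) (q_i: real) (q_j: real) (q_k: real)

instantiation quat :: "{zero, one, plus, minus, uminus, times}"
begin
definition zero_quat_def: "0 = Quat 0 0 0 0"
definition one_quat_def: "1 = Quat 1 0 0 0"
definition plus_quat_def:
  "p + q = Quat (q_re p + q_re q) (q_i p + q_i q) (q_j p + q_j q) (q_k p + q_k q)"
definition minus_quat_def:
  "p - q = Quat (q_re p - q_re q) (q_i p - q_i q) (q_j p - q_j q) (q_k p - q_k q)"
definition uminus_quat_def:
  "- p = Quat (- q_re p) (- q_i p) (- q_j p) (- q_k p)"
definition times_quat_def:
  "p * q = Quat
     (q_re p * q_re q - q_i p * q_i q - q_j p * q_j q - q_k p * q_k q)
     (q_re p * q_i q + q_i p * q_re q + q_j p * q_k q - q_k p * q_j q)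
     (q_re p * q_j q - q_i p * q_k q + q_j p * q_re q + q_k p * q_i q)
     (q_re p * q_k q + q_i p * q_j q - q_j p * q_i q + q_k p * q_re q)"
instance ..
end

definition qcnj :: "quat \<Rightarrow> quat" where
  "qcnj p = Quat (q_re p) (- q_i p) (- q_j p) (- q_k p)"

definition quat_of_complex :: "complex \<Rightarrow> quat" where
  "quat_of_complex z = Quat (Re z) (Im z) 0 0"

definition qj :: quat where
  "qj = Quat 0 0 1 0"

text \<open>Dual quaternions p_st + p_I \<epsilon>.\<close>

datatype dquat = DQ (dq_st: quat) (dq_du: quat)

instantiation dquat :: "{zero, one, plus, minus, uminus, times}"
begin
definition zero_dquat_def: "0 = DQ 0 0"
definition one_dquat_def: "1 = DQ 1 0"
definition plus_dquat_def: "p + q = DQ (dq_st p + dq_st q) (dq_du p + dq_du q)"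
definition minus_dquat_def: "p - q = DQ (dq_st p - dq_st q) (dq_du p - dq_du q)"
definition uminus_dquat_def: "- p = DQ (- dq_st p) (- dq_du p)"
definition times_dquat_def:
  "p * q = DQ (dq_st p * dq_st q) (dq_st p * dq_du q + dq_du p * dq_st q)"
instance ..
end

definition dcnj :: "dquat \<Rightarrow> dquat" where
  "dcnj p = DQ (qcnj (dq_st p)) (qcnj (dq_du p))"

definition unit_dq :: "dquat \<Rightarrow> bool" where
  "unit_dq p \<longleftrightarrow> dcnj p * p = 1 \<and> p * dcnj p = 1"

definition dual_complex :: "complex \<Rightarrow> complex \<Rightarrow> dquat" where
  "dual_complex a b = DQ (quat_of_complex a) (quat_of_complex b)"

definition cquat :: "complex \<Rightarrow> complex \<Rightarrow> quat" where
  "cquat z1 z2 = quat_of_complex z1 + quat_of_complex z2 * qj"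

end

theory Submission
  imports Defs
begin

lemma quat_eqI: "q_re p = q_re q \<Longrightarrow> q_i p = q_i q \<Longrightarrow> q_j p = q_j q \<Longrightarrow> q_k p = q_k q \<Longrightarrow> p = q"
  by (cases p; cases q) auto

instance quat :: ring_1
  by standard (auto intro!: quat_eqI simp: zero_quat_def one_quat_def plus_quat_def minus_quat_def
      uminus_quat_def times_quat_def algebra_simps)

lemma dquat_eqI: "dq_st p = dq_st q \<Longrightarrow> dq_du p = dq_du q \<Longrightarrow> p = q"
  by (cases p; cases q) auto

instance dquat :: ring_1
  by standard (auto intro!: dquat_eqI simp: zero_dquat_def one_dquat_def plus_dquat_def minus_dquat_def
      uminus_dquat_def times_dquat_def algebra_simps)

lemma cquat_simps: "cquat a b = Quat (Re a) (Im a) (Re b) (Im b)"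
  by (simp add: cquat_def quat_of_complex_def qj_def times_quat_def plus_quat_def)

lemma quat_cquat: "q = cquat (Complex (q_re q) (q_i q)) (Complex (q_j q) (q_k q))"
  by (cases q) (simp add: cquat_simps)

lemma cquat_inj[simp]: "cquat a b = cquat c d \<longleftrightarrow> a = c \<and> b = d"
  by (auto simp: cquat_simps complex_eq_iff)

lemma cquat_mult[simp]: "cquat a b * cquat c d = cquat (a*c - b*cnj d) (a*d + b*cnj c)"
  by (simp add: cquat_simps times_quat_def algebra_simps)

lemma cquat_add[simp]: "cquat a b + cquat c d = cquat (a+c) (b+d)"
  by (simp add: cquat_simps plus_quat_def)

lemma cquat_uminus[simp]: "- cquat a b = cquat (-a) (-b)"
  by (simp add: cquat_simps uminus_quat_def)

lemma cquat_cnj[simp]: "qcnj (cquat a b) = cquat (cnj a) (-b)"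
  by (simp add: cquat_simps qcnj_def)

lemma quat_of_complex_cquat: "quat_of_complex z = cquat z 0"
  by (simp add: cquat_simps quat_of_complex_def)

lemma one_cquat: "1 = cquat 1 0" and zero_cquat: "0 = cquat 0 0"
  by (simp_all add: cquat_simps one_quat_def zero_quat_def)

lemma qcnj_mult: "qcnj (p * q) = qcnj q * qcnj p"
  by (rule quat_eqI) (simp_all add: qcnj_def times_quat_def algebra_simps)
lemma qcnj_add: "qcnj (p + q) = qcnj p + qcnj q"
  by (rule quat_eqI) (simp_all add: qcnj_def plus_quat_def algebra_simps)
lemma qcnj_qcnj[simp]: "qcnj (qcnj p) = p"
  by (rule quat_eqI) (simp_all add: qcnj_def)

lemma dcnj_mult: "dcnj (p * q) = dcnj q * dcnj p"
  by (rule dquat_eqI) (simp_all add: dcnj_def times_dquat_def qcnj_mult qcnj_add add.commute)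
lemma dcnj_dcnj[simp]: "dcnj (dcnj p) = p"
  by (rule dquat_eqI) (simp_all add: dcnj_def)
lemma dcnj_uminus: "dcnj (- p) = - dcnj p"
  by (rule dquat_eqI) (simp_all add: dcnj_def uminus_dquat_def qcnj_def uminus_quat_def)

lemma core:
  fixes u v w z l1 l2 c1 c2 c3 c4 d1 d2 d3 d4 s :: complex
  assumes up: "unit_dq (DQ (cquat u v) (cquat w z))"
    and Lp: "dual_complex l1 l2 * DQ (cquat u v) (cquat w z) = DQ (cquat u v) (cquat w z) * dual_complex l1 l2" and l1: "l1 \<notin> \<real>"
    and Cp: "DQ (cquat c1 c2) (cquat c3 c4) * DQ (cquat u v) (cquat w z) = DQ (cquat u v) (cquat w z) * DQ (cquat d1 d2) (cquat d3 d4)"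
    and c2: "c2 \<noteq> 0" and s: "s\<^sup>2 = d2 / c2"
  shows "DQ (cquat u v) (cquat w z) = dual_complex (cnj s) ((cnj (c2 * d4) - cnj (d2 * c4)) / (2 * (cnj c2)\<^sup>2) * cnj (inverse s))
     \<or> DQ (cquat u v) (cquat w z) = - dual_complex (cnj s) ((cnj (c2 * d4) - cnj (d2 * c4)) / (2 * (cnj c2)\<^sup>2) * cnj (inverse s))"
proof -
  have l1c: "l1 \<noteq> cnj l1" using l1 by (metis Reals_cnj_iff)
  from Lp have "l1 * v = v * cnj l1 \<and> l1 * z + l2 * v = z * cnj l1 + v * cnj l2"
    by (simp add: dual_complex_def quat_of_complex_cquat times_dquat_def)
  then have e1: "l1 * v = v * cnj l1" and e2: "l1 * z + l2 * v = z * cnj l1 + v * cnj l2" by auto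
  have "v * (l1 - cnj l1) = 0" using e1 by (simp add: algebra_simps)
  then have v0: "v = 0" using l1c by simp
  have "z * (l1 - cnj l1) = 0" using e2 v0 by (simp add: algebra_simps)
  then have z0: "z = 0" using l1c by simp
  from up have "cnj u * u = 1 \<and> cnj u * w + cnj w * u = 0"
    using up by (simp add: unit_dq_def v0 z0 dcnj_def times_dquat_def one_dquat_def one_cquat zero_cquat)
  then have u1: "cnj u * u = 1" and uw: "cnj u * w + cnj w * u = 0" by auto
  from Cp have "c2 * cnj u = u * d2 \<and> c2 * cnj w + c4 * cnj u = u * d4 + w * d2"
  proof -
    have "DQ (cquat c1 c2) (cquat c3 c4) * DQ (cquat u 0) (cquat w 0) = DQ (cquat u 0) (cquat w 0) * DQ (cquat d1 d2) (cquat d3 d4)"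
      using Cp v0 z0 by simp
    then show ?thesis unfolding times_dquat_def
      by (simp only: dquat.sel cquat_mult cquat_add dquat.inject cquat_inj) simp
  qed
  then have f1: "c2 * cnj u = u * d2" and f2: "c2 * cnj w + c4 * cnj u = u * d4 + w * d2" by auto
  define W where "W = (cnj (c2 * d4) - cnj (d2 * c4)) / (2 * (cnj c2)\<^sup>2) * cnj u"
  have u0: "u \<noteq> 0" using u1 by auto
  have c2u: "c2 = u^2 * d2"
  proof -
    have "c2 = c2 * (cnj u * u)" using u1 by simp
    also have "\<dots> = (c2 * cnj u) * u" by (simp add: mult.assoc)
    also have "\<dots> = u^2 * d2" using f1 by (simp add: power2_eq_square mult.commute mult.left_commute)
    finally show ?thesis .
  qed
  have d2: "d2 \<noteq> 0" using c2 c2u by auto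
  have "s^2 = (cnj u)^2"
  proof -
    have "s^2 * c2 = d2" using s c2 by simp
    then have "s^2 * u^2 * d2 = d2" using c2u by (simp add: algebra_simps)
    then have "s^2 * u^2 = 1" using d2 by simp
    then have "s^2 * u^2 * (cnj u)^2 = (cnj u)^2" by simp
    moreover have "u^2 * (cnj u)^2 = 1" using u1 by (metis power_mult_distrib mult.commute power_one)
    ultimately show ?thesis by (metis mult.assoc mult_1_right)
  qed
  then have "(s - cnj u) * (s + cnj u) = 0" by (simp add: algebra_simps power2_eq_square)
  then have sc: "s = cnj u \<or> s = - cnj u" by (simp add: eq_neg_iff_add_eq_0)
  have cw: "cnj w = - cnj u * w * cnj u"
  proof -
    have "cnj w * u * cnj u = - cnj u * w * cnj u" using uw by (metis add_eq_0_iff mult_minus_left)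
    moreover have "cnj w * u * cnj u = cnj w * (cnj u * u)" by (simp add: mult.assoc mult.commute)
    ultimately show ?thesis using u1 by simp
  qed
  have cd2: "cnj d2 = u^2 * cnj c2"
  proof -
    have "cnj c2 = (cnj u)^2 * cnj d2" using c2u by simp
    then have "u^2 * cnj c2 = (u * cnj u)^2 * cnj d2" by (simp add: power_mult_distrib)
    then show ?thesis using u1 by (simp add: mult.commute)
  qed
  have g: "cnj c2 * w + cnj c4 * u = cnj u * cnj d4 + cnj w * cnj d2"
    using arg_cong[OF f2, of cnj] by simp
  have "cnj w * cnj d2 = - w * cnj c2"
  proof -
    have "cnj w * cnj d2 = - w * cnj c2 * (cnj u * u)^2" unfolding cw cd2 by (simp add: power2_eq_square algebra_simps)
    then show ?thesis using u1 by simp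
  qed
  then have g2: "2 * cnj c2 * w = cnj u * cnj d4 - cnj c4 * u" using g by (simp add: algebra_simps)
  have cc2: "cnj c2 \<noteq> 0" using c2 by simp
  have wW: "w = W"
  proof -
    have "W * (2 * (cnj c2)^2) = (cnj c2 * cnj d4 - cnj d2 * cnj c4) * cnj u"
      unfolding W_def using cc2 by simp
    also have "\<dots> = cnj c2 * (cnj u * cnj d4 - cnj c4 * u * (u * cnj u))"
      unfolding cd2 by (simp add: power2_eq_square algebra_simps)
    also have "\<dots> = cnj c2 * (2 * cnj c2 * w)" using g2 u1 by (simp add: mult.commute)
    finally have "W * (2 * (cnj c2)^2) = w * (2 * (cnj c2)^2)" by (simp add: power2_eq_square algebra_simps)
    then show ?thesis using cc2 by simp
  qed
  have iu: "inverse (cnj u) = u" using u1 by (rule inverse_unique)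
  from sc show ?thesis
  proof
    assume "s = cnj u"
    then show ?thesis using wW iu
      by (simp add: W_def v0 z0 dual_complex_def quat_of_complex_cquat)
  next
    assume "s = - cnj u"
    then show ?thesis using wW iu
      by (simp add: W_def v0 z0 dual_complex_def quat_of_complex_cquat uminus_dquat_def)
  qed
qed

lemma dquat_decomp: "\<exists>u v w z. p = DQ (cquat u v) (cquat w z)"
  by (metis dquat.collapse quat_cquat)

lemma unit_neg: "unit_dq q \<Longrightarrow> unit_dq (- q)"
  by (simp add: unit_dq_def dcnj_uminus)

lemma unit_not0: "\<not> unit_dq 0"
proof -
  have "(0::dquat) \<noteq> 1" by (simp add: zero_dquat_def one_dquat_def zero_quat_def one_quat_def)
  then show ?thesis by (simp add: unit_dq_def)
qed

theorem theorem3p1: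
  fixes a b c d x y :: dquat
    and lam_st lam_du c1 c2 c3 c4 d1 d2 d3 d4 :: complex
  assumes ex_q: "\<exists>q. unit_dq q \<and> a * q = q * b \<and> c * q = q * d"
    and ux: "unit_dq x" and uy: "unit_dq y"
    and a_eq: "a = dcnj x * dual_complex lam_st lam_du * x"
    and b_eq: "b = dcnj y * dual_complex lam_st lam_du * y"
    and lam_nonreal: "lam_st \<notin> \<real>"
    and c_eq: "x * c * dcnj x = DQ (cquat c1 c2) (cquat c3 c4)"
    and d_eq: "y * d * dcnj y = DQ (cquat d1 d2) (cquat d3 d4)"
    and c2_nz: "c2 \<noteq> 0"
  shows "\<forall>s::complex. s\<^sup>2 = d2 / c2 \<longrightarrow>
    (let Q = dcnj x * dual_complex (cnj s)
               ((cnj (c2 * d4) - cnj (d2 * c4)) / (2 * (cnj c2)\<^sup>2) * cnj (inverse s)) * y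
     in {q. unit_dq q \<and> a * q = q * b \<and> c * q = q * d} = {Q, - Q} \<and> Q \<noteq> - Q)"
proof (intro allI impI)
  fix s :: complex
  assume s: "s\<^sup>2 = d2 / c2"
  define P0 where "P0 = dual_complex (cnj s)
               ((cnj (c2 * d4) - cnj (d2 * c4)) / (2 * (cnj c2)\<^sup>2) * cnj (inverse s))"
  define Q where "Q = dcnj x * P0 * y"
  define S where "S = {q. unit_dq q \<and> a * q = q * b \<and> c * q = q * d}"
  define L where "L = dual_complex lam_st lam_du"
  have x1: "dcnj x * x = 1" "x * dcnj x = 1" using ux by (auto simp: unit_dq_def)
  have y1: "dcnj y * y = 1" "y * dcnj y = 1" using uy by (auto simp: unit_dq_def)
  have "x * a * dcnj x = (x * dcnj x) * L * (x * dcnj x)" by (simp add: a_eq L_def mult.assoc)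
  then have xa: "x * a * dcnj x = L" by (simp add: x1)
  have "y * b * dcnj y = (y * dcnj y) * L * (y * dcnj y)" by (simp add: b_eq L_def mult.assoc)
  then have yb: "y * b * dcnj y = L" by (simp add: y1)
  have K: "q = Q \<or> q = - Q" if qS: "q \<in> S" for q
  proof -
    define p where "p = x * q * dcnj y"
    have uq: "unit_dq q" and aq: "a * q = q * b" and cq: "c * q = q * d" using qS by (auto simp: S_def)
    have "dcnj p * p = y * (dcnj q * (dcnj x * x) * q) * dcnj y"
      by (simp add: p_def dcnj_mult mult.assoc)
    also have "\<dots> = 1" using uq x1 y1 by (simp add: unit_dq_def)
    finally have pp1: "dcnj p * p = 1" .
    have "p * dcnj p = x * (q * (dcnj y * y) * dcnj q) * dcnj x"
      by (simp add: p_def dcnj_mult mult.assoc)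
    also have "\<dots> = 1" using uq x1 y1 by (simp add: unit_dq_def)
    finally have "p * dcnj p = 1" .
    with pp1 have up: "unit_dq p" by (simp add: unit_dq_def)
    have gen: "(x * e * dcnj x) * p = p * (y * f * dcnj y)" if "e * q = q * f" for e f
    proof -
      have "(x * e * dcnj x) * p = x * e * (dcnj x * x) * q * dcnj y"
        by (simp add: p_def mult.assoc)
      also have "\<dots> = x * (e * q) * dcnj y" by (simp add: x1 mult.assoc)
      also have "\<dots> = x * (q * f) * dcnj y" using that by simp
      also have "\<dots> = x * q * (dcnj y * y) * f * dcnj y" by (simp add: y1 mult.assoc)
      also have "\<dots> = p * (y * f * dcnj y)"
        by (simp add: p_def mult.assoc)
      finally show ?thesis .
    qed
    have Lp: "L * p = p * L" using gen[OF aq] xa yb by simp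
    have Cp: "DQ (cquat c1 c2) (cquat c3 c4) * p = p * DQ (cquat d1 d2) (cquat d3 d4)"
      using gen[OF cq] c_eq d_eq by simp
    obtain u v w z where pe: "p = DQ (cquat u v) (cquat w z)" using dquat_decomp by blast
    have "p = P0 \<or> p = - P0"
      using core[OF up[unfolded pe] Lp[unfolded pe L_def] lam_nonreal Cp[unfolded pe] c2_nz s]
      unfolding pe P0_def by simp
    moreover have "dcnj x * p * y = (dcnj x * x) * q * (dcnj y * y)"
      by (simp add: p_def mult.assoc)
    then have "q = dcnj x * p * y" by (simp add: x1 y1)
    ultimately show ?thesis by (auto simp: Q_def)
  qed
  have negS: "- q \<in> S" if "q \<in> S" for q
    using that by (auto simp: S_def unit_neg)
  obtain q0 where q0: "q0 \<in> S" using ex_q by (auto simp: S_def)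
  have QS: "Q \<in> S \<and> - Q \<in> S"
    using K[OF q0]
  proof
    assume "q0 = Q" then show ?thesis using q0 negS by auto
  next
    assume "q0 = - Q" then show ?thesis using q0 negS[of q0] by (metis minus_minus)
  qed
  have "S = {Q, - Q}" using K QS by blast
  moreover have "Q \<noteq> - Q"
  proof
    assume QQ: "Q = - Q"
    have "x * Q * dcnj y = (x * dcnj x) * P0 * (y * dcnj y)"
      by (simp add: Q_def mult.assoc)
    then have "P0 = x * Q * dcnj y" by (simp add: x1 y1)
    also have "\<dots> = - (x * Q * dcnj y)" using QQ by (metis minus_mult_left minus_mult_right)
    finally have "P0 = - P0" using \<open>P0 = x * Q * dcnj y\<close> by simp
    then have "cnj s = 0"
      by (simp add: P0_def dual_complex_def quat_of_complex_cquat uminus_dquat_def)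
    then have "P0 = 0"
      by (simp add: P0_def dual_complex_def quat_of_complex_cquat zero_dquat_def zero_cquat)
    then have "Q = 0" by (simp add: Q_def)
    then have "q0 = 0" using K[OF q0] by simp
    then show False using q0 unit_not0 by (simp add: S_def)
  qed
  ultimately show "let Q = dcnj x * dual_complex (cnj s)
               ((cnj (c2 * d4) - cnj (d2 * c4)) / (2 * (cnj c2)\<^sup>2) * cnj (inverse s)) * y
     in {q. unit_dq q \<and> a * q = q * b \<and> c * q = q * d} = {Q, - Q} \<and> Q \<noteq> - Q"
    by (simp add: Q_def P0_def S_def Let_def)
qed

end
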